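(* For all $s,s_1,s_2\in\mathcal S$ the link velocities satisfy the reciprocity relation $$\vec\beta(s,s_2,s_1)=-\,\vec\beta(s,s_1,s_2)$$ in $T_s\mathcal S$.
   Context: $V$ is a 4-dimensional real vector space with a symmetric non-degenerate bilinear form $\eta$ of signature $(-,+,+,+)$; $\mathcal S$ is one fixed connected component of $\{v\in V:\eta(v,v)=-1\}$; $T_s\mathcal S:=\{u\in V:\eta(u,s)=0\}$. With $(u\otimes v)(w):=\eta(v,w)u$, for $s\in\mathcal S$ and $\vec\beta\in T_s\mathcal S$ with $\beta^2=\eta(\vec\beta,\vec\beta)<1$, $\beta>0$, $\vec n=\vec\beta/\beta$, $\gamma=(1-\beta^2)^{-1/2}$, the boost relative to $s$ is $B(s,\vec\beta)=\mathrm{id}_V+(\gamma-1)(-s\otimes s+\vec n\otimes\vec n)+\beta\gamma(s\otimes\vec n-\vec n\otimes s)$, $B(s,0)=\mathrm{id}_V$. The link velocity $\vec\beta(s,s_1,s_2)$ of $s_2$ against $s_1$ relative to $s$ is the unique $\vec\beta\in T_s\mathcal S$ of $\eta$-norm $<1$ with $B(s,\vec\beta)s_1=s_2$. *)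

theory Defs
  imports "HOL-Analysis.Analysis"
begin

text \<open>Signature is expressed by the existence of an
eta-orthonormal basis e_0,...,e_3 with eta(e_0,e_0) = -1 and eta(e_i,e_i) = 1 for i > 0.\<close>
definition lorentz_form :: "('v::euclidean_space \<Rightarrow> 'v \<Rightarrow> real) \<Rightarrow> bool" where
  "lorentz_form \<eta> \<longleftrightarrow>
     DIM('v) = 4 \<and> bilinear \<eta> \<and> (\<forall>u v. \<eta> u v = \<eta> v u) \<and>
     (\<forall>u. (\<forall>v. \<eta> u v = 0) \<longrightarrow> u = 0) \<and>
     (\<exists>e::nat \<Rightarrow> 'v. span (e ` {..<4}) = UNIV \<and>
        (\<forall>i<4. \<forall>j<4. \<eta> (e i) (e j) = (if i \<noteq> j then 0 else if i = 0 then -1 else 1)))"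

definition hyperboloid :: "('v \<Rightarrow> 'v \<Rightarrow> real) \<Rightarrow> 'v set" where
  "hyperboloid \<eta> = {v. \<eta> v v = -1}"

definition tangent_space :: "('v \<Rightarrow> 'v \<Rightarrow> real) \<Rightarrow> 'v \<Rightarrow> 'v::real_vector set" where
  "tangent_space \<eta> s = {u. \<eta> u s = 0}"

definition boost :: "('v \<Rightarrow> 'v \<Rightarrow> real) \<Rightarrow> 'v \<Rightarrow> 'v \<Rightarrow> 'v \<Rightarrow> 'v::real_vector" where
  "boost \<eta> s b =
     (if b = 0 then id
      else (let \<beta> = sqrt (\<eta> b b); n = (1 / \<beta>) *\<^sub>R b; \<gamma> = 1 / sqrt (1 - \<beta>\<^sup>2) in
            (\<lambda>w. w + (\<gamma> - 1) *\<^sub>R (- (\<eta> s w *\<^sub>R s) + \<eta> n w *\<^sub>R n)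
                   + (\<beta> * \<gamma>) *\<^sub>R (\<eta> n w *\<^sub>R s - \<eta> s w *\<^sub>R n))))"

definition link_velocity :: "('v \<Rightarrow> 'v \<Rightarrow> real) \<Rightarrow> 'v \<Rightarrow> 'v \<Rightarrow> 'v \<Rightarrow> 'v::real_vector" where
  "link_velocity \<eta> s s1 s2 =
     (THE b. b \<in> tangent_space \<eta> s \<and> \<eta> b b < 1 \<and> boost \<eta> s b s1 = s2)"

end

theory Submission
  imports Defs
begin


lemma R1:
  fixes q a e g :: real
  assumes "0<q" "q<1" "a>0" "(g-1) * a + g * e = 0" "(g-1) * e/q + g * a = 0" "g = 1/sqrt(1-q)"
  shows False
proof -
  have r: "sqrt (1-q) > 0" "sqrt (1-q) < 1" using assms(1,2) by auto
  have g1: "g > 1" using r by (simp add: assms(6) less_divide_eq)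
  have gr: "g * sqrt (1-q) = 1" using assms(6) r(1) by simp
  have sq: "sqrt(1-q) * sqrt(1-q) = 1-q" using assms(2) by simp
  have "g * g * (1-q) = (g * sqrt(1-q)) * (g * sqrt(1-q))" using sq by (simp add: algebra_simps)
  hence gg: "g * g * (1-q) = 1" using gr by simp
  have e2: "(g-1) * e + g * a * q = 0" using assms(5) assms(1) by (simp add: field_simps)
  have "g * ((g-1) * e + g * a * q) = 0" using e2 by simp
  hence "(g-1) * (g * e) + (g * g * q) * a = 0" by (simp add: algebra_simps)
  moreover have "g * e = -(g-1) * a" using assms(4) by (simp add: algebra_simps)
  moreover have "g * g * q = g * g - 1"
  proof -
    have "g * g * (1-q) = g * g - g * g * q" by (simp add: algebra_simps)
    thus ?thesis using gg by linarith
  qed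
  ultimately have "(g-1) * (-(g-1) * a) + (g * g-1) * a = 0" by simp
  hence "2 * a * (g-1) = 0" by (simp add: algebra_simps)
  thus False using g1 assms(3) by simp
qed

lemma R2:
  fixes t g k :: real
  assumes "-1<t" "t<1" "g = 1/sqrt(1-t\<^sup>2)" "k = g * (1+t)"
  shows "t = (k\<^sup>2-1)/(k\<^sup>2+1)"
proof -
  have p: "1 - t\<^sup>2 > 0" using assms(1,2) by (simp add: abs_square_less_1 abs_less_iff)
  have gg: "g\<^sup>2 = 1/(1-t\<^sup>2)" using assms(3) p by (simp add: power_divide)
  have "k\<^sup>2 = (1+t)\<^sup>2/(1-t\<^sup>2)" using assms(4) gg by (simp add: power_mult_distrib)
  also have "\<dots> = (1+t) * (1+t)/((1-t) * (1+t))" by (simp add: algebra_simps power2_eq_square)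
  also have "\<dots> = (1+t)/(1-t)" using assms(1,2) by simp
  finally have k2: "k\<^sup>2 = (1+t)/(1-t)" .
  show ?thesis unfolding k2 using assms(1,2) by (simp add: field_simps)
qed

lemma R3:
  fixes a1 a2 x1 x2 n k t g :: real
  assumes "a1 + x1 > 0" "a1 - x1 > 0" "a2 + x2 > 0" "a2 - x2 > 0"
    "(a1 - x1) * (a1 + x1) = (a2 - x2) * (a2 + x2)" "x2 = x1 + n" "n > 0"
    "k = (a2 + x2)/(a1 + x1)" "t = (k\<^sup>2-1)/(k\<^sup>2+1)" "g = 1/sqrt(1-t\<^sup>2)"
  shows "t \<noteq> 0" "-1 < t" "t < 1" "(g-1) * a1 + g * t * x1 = a2 - a1" "((g-1) * (t * x1)/(t * t) + g * a1) * t = n"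
proof -
  have kp: "k > 0" using assms(1,3,8) by simp
  have k2p: "k\<^sup>2 + 1 > 0" using zero_le_power2[of k] by linarith
  have tD: "t * (k\<^sup>2+1) = k\<^sup>2 - 1" unfolding assms(9) using k2p by simp
  have "(1 - t\<^sup>2) * (k\<^sup>2+1)\<^sup>2 = (k\<^sup>2+1)\<^sup>2 - (t * (k\<^sup>2+1))\<^sup>2" by (simp add: algebra_simps power2_eq_square)
  also have "\<dots> = 4 * k\<^sup>2" unfolding tD by (simp add: algebra_simps power2_eq_square)
  finally have "1 - t\<^sup>2 = 4 * k\<^sup>2 / (k\<^sup>2+1)\<^sup>2" using k2p by (simp add: field_simps)
  hence tt: "1 - t\<^sup>2 = (2 * k/(k\<^sup>2+1))\<^sup>2" by (simp add: power_divide power_mult_distrib)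
  have sq: "sqrt (1 - t\<^sup>2) = 2 * k/(k\<^sup>2+1)" unfolding tt using kp k2p by simp
  have g: "g = (k\<^sup>2+1)/(2 * k)" unfolding assms(10) sq by simp
  have opt: "1 + t = 2 * k\<^sup>2/(k\<^sup>2+1)" unfolding assms(9) using k2p by (simp add: field_simps)
  have omt: "1 - t = 2/(k\<^sup>2+1)" unfolding assms(9) using k2p by (simp add: field_simps)
  have gp: "g * (1+t) = k" unfolding g opt using kp k2p by (simp add: power2_eq_square)
  have gr: "g * sqrt (1-t\<^sup>2) = 1" unfolding assms(10) sq using kp k2p by simp
  have "1-t\<^sup>2 \<ge> 0" unfolding tt by simp
  hence sq2: "sqrt(1-t\<^sup>2) * sqrt(1-t\<^sup>2) = 1-t\<^sup>2" by simp
  have "g * g * (1-t\<^sup>2) = (g * sqrt(1-t\<^sup>2)) * (g * sqrt(1-t\<^sup>2))" using sq2 by (simp add: algebra_simps)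
  hence ggt: "g * g * (1-t\<^sup>2) = 1" using gr by simp
  have "(g * (1-t)) * k = g * g * (1-t\<^sup>2)" unfolding gp[symmetric] by (simp add: algebra_simps power2_eq_square)
  hence gm: "g * (1-t) = 1/k" using ggt kp by (simp add: field_simps)
  have k1: "k * (a1+x1) = a2+x2" unfolding assms(8) using assms(1) by simp
  have k3: "(a1-x1) = k * (a2-x2)"
  proof -
    have "(a2-x2) * (a2+x2) = (k * (a2-x2)) * (a1+x1)" unfolding k1[symmetric] by (simp only: mult_ac)
    hence "(a1-x1) * (a1+x1) = (k * (a2-x2)) * (a1+x1)" using assms(5) by simp
    thus ?thesis using assms(1) by simp
  qed
  show "t \<noteq> 0"
  proof
    assume "t = 0"
    hence "k\<^sup>2 = 1" using assms(9) k2p by simp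
    hence "k = 1" using kp by (simp add: power2_eq_1_iff)
    thus False using k1 k3 assms(6,7) by simp
  qed
  show "-1 < t" "t < 1" unfolding assms(9) using k2p kp by (simp_all add: field_simps)
  have A: "g * (a1 + t * x1) = a2"
  proof -
    have "g * (a1 + t * x1) = (g * (1+t) * (a1+x1) + g * (1-t) * (a1-x1))/2" by (simp add: algebra_simps)
    also have "\<dots> = ((a2+x2) + (a2-x2))/2" unfolding gp gm using k1 k3 kp by simp
    finally show ?thesis by simp
  qed
  have B: "g * (x1 + t * a1) = x2"
  proof -
    have "g * (x1 + t * a1) = (g * (1+t) * (a1+x1) - g * (1-t) * (a1-x1))/2" by (simp add: algebra_simps)
    also have "\<dots> = ((a2+x2) - (a2-x2))/2" unfolding gp gm using k1 k3 kp by simp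
    finally show ?thesis by simp
  qed
  show "(g-1) * a1 + g * t * x1 = a2 - a1" using A by (simp add: algebra_simps)
  have "((g-1) * (t * x1)/(t * t) + g * a1) * t = (g-1) * x1 + g * a1 * t" using \<open>t \<noteq> 0\<close>
    by (simp add: field_simps power2_eq_square)
  also have "\<dots> = n" using B assms(6) by (simp add: algebra_simps)
  finally show "((g-1) * (t * x1)/(t * t) + g * a1) * t = n" .
qed



locale lor =
  fixes E :: "'v::real_vector \<Rightarrow> 'v \<Rightarrow> real" and s :: 'v
  assumes bil: "bilinear E" and sym: "\<And>u v. E u v = E v u" and ss: "E s s = -1"
  and pos: "\<And>u. E u s = 0 \<Longrightarrow> E u u \<ge> 0"
  and posz: "\<And>u. E u s = 0 \<Longrightarrow> E u u = 0 \<Longrightarrow> u = 0"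
begin

lemma Esimps[simp]:
  "E (x + y) z = E x z + E y z" "E x (y + z) = E x y + E x z"
  "E (x - y) z = E x z - E y z" "E x (y - z) = E x y - E x z"
  "E (c *\<^sub>R x) y = c * E x y" "E x (c *\<^sub>R y) = c * E x y"
  "E (- x) y = - E x y" "E x (- y) = - E x y"
  "E 0 y = 0" "E x 0 = 0"
  using bil by (simp_all add: bilinear_ladd bilinear_radd bilinear_lsub bilinear_rsub
      bilinear_lmul bilinear_rmul bilinear_lneg bilinear_rneg bilinear_lzero bilinear_rzero)

definition "aa w = - E s w"
definition "xp w = w - aa w *\<^sub>R s"
definition "yv p1 p2 = xp p2 - xp p1"
definition "nyv p1 p2 = sqrt (E (yv p1 p2) (yv p1 p2))"
definition "yh p1 p2 = (1 / nyv p1 p2) *\<^sub>R yv p1 p2"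
definition "kk p1 p2 = (aa p2 + E (yh p1 p2) p2) / (aa p1 + E (yh p1 p2) p1)"
definition "tt p1 p2 = ((kk p1 p2)\<^sup>2 - 1) / ((kk p1 p2)\<^sup>2 + 1)"
definition "b0 p1 p2 = (if yv p1 p2 = 0 then 0 else tt p1 p2 *\<^sub>R yh p1 p2)"

lemma boost_formula:
  assumes "E b s = 0" "b \<noteq> 0" "E b b < 1"
  shows "boost E s b w = w + (- (1 / sqrt (1 - E b b) - 1) * E s w + (1 / sqrt (1 - E b b)) * E b w) *\<^sub>R s
     + ((1 / sqrt (1 - E b b) - 1) * E b w / E b b - (1 / sqrt (1 - E b b)) * E s w) *\<^sub>R b"
proof -
  have q: "E b b > 0" using pos[OF assms(1)] posz[OF assms(1)] assms(2) by force
  define g where "g = 1 / sqrt (1 - E b b)"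
  have sq: "(sqrt (E b b))\<^sup>2 = E b b" using q by simp
  have sp: "sqrt (E b b) > 0" using q by simp
  have "boost E s b w = w + (g - 1) *\<^sub>R (- (E s w *\<^sub>R s) + E ((1 / sqrt (E b b)) *\<^sub>R b) w *\<^sub>R (1 / sqrt (E b b)) *\<^sub>R b)
                   + (sqrt (E b b) * g) *\<^sub>R (E ((1 / sqrt (E b b)) *\<^sub>R b) w *\<^sub>R s - E s w *\<^sub>R (1 / sqrt (E b b)) *\<^sub>R b)"
    unfolding boost_def g_def using assms(2) sq by (simp add: Let_def)
  also have "\<dots> = w + (- (g - 1) * E s w + g * E b w) *\<^sub>R s
     + ((g - 1) * E b w / E b b - g * E s w) *\<^sub>R b"
  proof -
    have e1: "r * g * (1 / r * E b w) = g * E b w" if "r > 0" for r using that by simp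
    have e2: "(g - 1) * (1 / r * E b w) * (1 / r) = (g - 1) * E b w / (r * r)" for r by simp
    have e3: "r * g * E s w * (1 / r) = g * E s w" if "r > 0" for r using that by simp
    have "w + (g - 1) *\<^sub>R (- (E s w *\<^sub>R s) + E ((1 / sqrt (E b b)) *\<^sub>R b) w *\<^sub>R (1 / sqrt (E b b)) *\<^sub>R b)
                   + (sqrt (E b b) * g) *\<^sub>R (E ((1 / sqrt (E b b)) *\<^sub>R b) w *\<^sub>R s - E s w *\<^sub>R (1 / sqrt (E b b)) *\<^sub>R b)
         = w + ((g - 1) * - E s w + sqrt (E b b) * g * (1 / sqrt (E b b) * E b w)) *\<^sub>R s
             + ((g - 1) * (1 / sqrt (E b b) * E b w) * (1 / sqrt (E b b)) - sqrt (E b b) * g * E s w * (1 / sqrt (E b b))) *\<^sub>R b"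
      by (simp only: Esimps scaleR_add_right scaleR_diff_right scaleR_scaleR scaleR_minus_right
            scaleR_add_left scaleR_diff_left scaleR_minus_left add_ac diff_conv_add_uminus mult_minus_right mult.assoc)
    also have "\<dots> = w + (- (g - 1) * E s w + g * E b w) *\<^sub>R s + ((g - 1) * E b w / E b b - g * E s w) *\<^sub>R b"
      unfolding e1[OF sp] e2 e3[OF sp] using q by (simp add: algebra_simps)
    finally show ?thesis .
  qed
  finally show ?thesis unfolding g_def .
qed

lemma xp_orth: "E (xp w) s = 0"
  unfolding xp_def aa_def using ss sym[of w s] by simp

lemma xp_decomp: "w = aa w *\<^sub>R s + xp w"
  unfolding xp_def by simp

lemma xp_norm: "E w w = -1 \<Longrightarrow> E (xp w) (xp w) = (aa w)\<^sup>2 - 1"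
  unfolding xp_def aa_def using ss sym[of w s] by (simp add: power2_eq_square algebra_simps)

lemma yv_orth: "E (yv p1 p2) s = 0"
  unfolding yv_def using xp_orth by simp

lemma diff_decomp: "p2 - p1 = (aa p2 - aa p1) *\<^sub>R s + yv p1 p2"
  unfolding yv_def xp_def by (simp add: algebra_simps)

context
  fixes s1 s2
  assumes n1: "E s1 s1 = -1" and n2: "E s2 s2 = -1" and t1: "E s1 s < 0" and t2: "E s2 s < 0"
begin

lemma a_pos: "aa s1 > 0" "aa s2 > 0"
  unfolding aa_def using t1 t2 sym[of s1 s] sym[of s2 s] by auto

lemma y0_eq: assumes "yv s1 s2 = 0" shows "s1 = s2"
proof -
  define d where "d = aa s2 - aa s1"
  have "s2 - s1 = d *\<^sub>R s" using diff_decomp[of s2 s1] assms unfolding d_def by simp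
  hence e: "s2 = s1 + d *\<^sub>R s" by (simp add: algebra_simps)
  have "E s2 s2 = E s1 s1 + 2 * d * E s1 s - d * d"
    unfolding e using ss sym[of s s1] by (simp add: algebra_simps)
  moreover have "aa s1 = - E s1 s" unfolding aa_def using sym[of s s1] by simp
  ultimately have "d * (2 * aa s1 + d) = 0" using n1 n2 by (simp add: algebra_simps)
  moreover have "2 * aa s1 + d > 0" unfolding d_def using a_pos by simp
  ultimately have "d = 0" by simp
  thus ?thesis using e by simp
qed

end

lemma xi_x: "E (yh p1 p2) w = E (yh p1 p2) (xp w)"
proof -
  have "E (yh p1 p2) s = 0" unfolding yh_def using yv_orth by simp
  hence "E (yh p1 p2) (aa w *\<^sub>R s + xp w) = E (yh p1 p2) (xp w)" using sym by simp
  thus ?thesis using xp_decomp[of w] by simp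
qed

context
  fixes s1 s2
  assumes n1: "E s1 s1 = -1" and n2: "E s2 s2 = -1" and t1: "E s1 s < 0" and t2: "E s2 s < 0"
  and yne: "yv s1 s2 \<noteq> 0"
begin

lemma ypos: "E (yv s1 s2) (yv s1 s2) > 0"
  using pos[OF yv_orth[of s1 s2]] posz[OF yv_orth[of s1 s2]] yne by force

lemma nypos: "nyv s1 s2 > 0" and nysq: "nyv s1 s2 * nyv s1 s2 = E (yv s1 s2) (yv s1 s2)"
  unfolding nyv_def using ypos by auto

lemma y_h: "yv s1 s2 = nyv s1 s2 *\<^sub>R yh s1 s2"
  unfolding yh_def using nypos by simp

lemma hh: "E (yh s1 s2) (yh s1 s2) = 1" and hs: "E (yh s1 s2) s = 0"
  unfolding yh_def using nysq nypos yv_orth by (auto simp: field_simps)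

lemma Ehy: "E (yh s1 s2) (yv s1 s2) = nyv s1 s2"
  using hh nypos by (subst y_h) simp

lemma xi2: "E (yh s1 s2) s2 = E (yh s1 s2) s1 + nyv s1 s2"
proof -
  have "E (yh s1 s2) s2 = E (yh s1 s2) (xp s2)" by (rule xi_x)
  also have "xp s2 = xp s1 + yv s1 s2" unfolding yv_def by simp
  finally show ?thesis using Ehy xi_x[of s1 s2 s1] by simp
qed

lemma apx_gen:
  assumes "E w w = -1" "aa w > 0"
  shows "aa w + E (yh s1 s2) w > 0" "aa w - E (yh s1 s2) w > 0"
proof -
  define h where "h = yh s1 s2"
  define \<xi> where "\<xi> = E h w"
  define p where "p = xp w - \<xi> *\<^sub>R h"
  have ps: "E p s = 0" unfolding p_def h_def using xp_orth hs by simp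
  have hx: "E h (xp w) = \<xi>" unfolding \<xi>_def h_def by (rule xi_x[symmetric])
  have "E p p = E (xp w) (xp w) - 2 * \<xi> * E h (xp w) + \<xi> * \<xi> * E h h"
    unfolding p_def using sym[of "xp w" h] by (simp add: algebra_simps)
  also have "\<dots> = (aa w)\<^sup>2 - 1 - \<xi>\<^sup>2" using hx hh xp_norm[OF assms(1)] unfolding h_def
    by (simp add: power2_eq_square)
  finally have "(aa w)\<^sup>2 \<ge> 1 + \<xi>\<^sup>2" using pos[OF ps] by simp
  hence "(aa w + \<xi>) * (aa w - \<xi>) > 0" by (simp add: algebra_simps power2_eq_square)
  hence "aa w + \<xi> > 0 \<and> aa w - \<xi> > 0" using assms(2)
    by (auto simp: zero_less_mult_iff)
  thus "aa w + E (yh s1 s2) w > 0" "aa w - E (yh s1 s2) w > 0" unfolding \<xi>_def h_def by auto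
qed

lemma prodrel:
  "(aa s1 - E (yh s1 s2) s1) * (aa s1 + E (yh s1 s2) s1)
   = (aa s2 - E (yh s1 s2) s2) * (aa s2 + E (yh s1 s2) s2)"
proof -
  define h where "h = yh s1 s2"
  define y where "y = yv s1 s2"
  define ny where "ny = nyv s1 s2"
  have x2: "xp s2 = xp s1 + y" unfolding y_def yv_def by simp
  have "E (xp s2) (xp s2) = E (xp s1) (xp s1) + 2 * E (xp s1) y + E y y"
    unfolding x2 using sym[of y "xp s1"] by simp
  moreover have "E (xp s1) y = ny * E h s1"
    unfolding y_def ny_def h_def using sym[of "xp s1"] xi_x[of s1 s2 s1] by (subst y_h) simp
  moreover have "E y y = ny * ny" unfolding y_def ny_def using nysq by simp
  moreover have "E h s2 = E h s1 + ny" unfolding h_def ny_def by (rule xi2)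
  ultimately have "(aa s2)\<^sup>2 - 1 = (aa s1)\<^sup>2 - 1 + 2 * (ny * E h s1) + ny * ny" "E h s2 = E h s1 + ny"
    using xp_norm[OF n1] xp_norm[OF n2] by simp_all
  hence "(aa s1 - E h s1) * (aa s1 + E h s1) = (aa s2 - E h s2) * (aa s2 + E h s2)"
    by (simp add: algebra_simps power2_eq_square)
  thus ?thesis unfolding h_def .
qed

end

lemma yv_self: "yv p p = 0" unfolding yv_def by simp

context
  fixes s1 s2
  assumes n1: "E s1 s1 = -1" and n2: "E s2 s2 = -1" and t1: "E s1 s < 0" and t2: "E s2 s < 0"
begin

lemma char:
  assumes bs: "E b s = 0" and bb: "E b b < 1"
  shows "boost E s b s1 = s2 \<longleftrightarrow> b = b0 s1 s2"
proof (cases "yv s1 s2 = 0")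
  case True
  have eq: "s1 = s2" by (rule y0_eq[OF n1 n2 t1 t2 True])
  have b0z: "b0 s1 s2 = 0" using True unfolding b0_def by simp
  show ?thesis
  proof
    assume B: "boost E s b s1 = s2"
    show "b = b0 s1 s2"
    proof (rule ccontr)
      assume "b \<noteq> b0 s1 s2" hence bn: "b \<noteq> 0" using b0z by simp
      have q: "E b b > 0" using pos[OF bs] posz[OF bs] bn by force
      define g where "g = 1 / sqrt (1 - E b b)"
      define A where "A = - (g - 1) * E s s1 + g * E b s1"
      define L where "L = (g - 1) * E b s1 / E b b - g * E s s1"
      have "s2 = s1 + A *\<^sub>R s + L *\<^sub>R b" using B boost_formula[OF bs bn bb, of s1]
        unfolding A_def L_def g_def by simp
      hence z: "A *\<^sub>R s + L *\<^sub>R b = 0" using eq by (simp add: add.assoc)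
      have "E (A *\<^sub>R s + L *\<^sub>R b) s = 0" using z by simp
      hence A0: "A = 0" using ss bs by simp
      hence "L = 0" using z bn by simp
      have r1: "(g-1)*aa s1 + g*E b s1 = 0" using A0 unfolding A_def aa_def by (simp add: algebra_simps)
      have r2: "(g-1)*E b s1 / E b b + g*aa s1 = 0" using \<open>L = 0\<close> unfolding L_def aa_def by (simp add: algebra_simps)
      show False using R1[OF q bb a_pos(1)[OF n1 n2 t1 t2] r1 r2 g_def] .
    qed
  next
    assume "b = b0 s1 s2" hence "b = 0" using b0z by simp
    thus "boost E s b s1 = s2" using eq unfolding boost_def by simp
  qed
next
  case False
  note ff = n1 n2 t1 t2 False
  define h where "h = yh s1 s2"
  define y where "y = yv s1 s2"
  define ny where "ny = nyv s1 s2"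
  define x1 where "x1 = E h s1"
  define x2 where "x2 = E h s2"
  define a1 where "a1 = aa s1"
  define a2 where "a2 = aa s2"
  define k where "k = kk s1 s2"
  define t where "t = tt s1 s2"
  have hh: "E h h = 1" and hs: "E h s = 0" using hh[OF ff] hs[OF ff] unfolding h_def by auto
  have yh: "y = ny *\<^sub>R h" using y_h[OF ff] unfolding y_def ny_def h_def .
  have nyp: "ny > 0" using nypos[OF ff] unfolding ny_def .
  have xx2: "x2 = x1 + ny" using xi2[OF ff] unfolding x2_def x1_def ny_def h_def .
  have ap1: "a1 + x1 > 0" "a1 - x1 > 0" using apx_gen[OF ff n1 a_pos(1)[OF n1 n2 t1 t2]]
    unfolding a1_def x1_def h_def by auto
  have ap2: "a2 + x2 > 0" "a2 - x2 > 0" using apx_gen[OF ff n2 a_pos(2)[OF n1 n2 t1 t2]]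
    unfolding a2_def x2_def h_def by auto
  have pr: "(a1 - x1)*(a1 + x1) = (a2 - x2)*(a2 + x2)" using prodrel[OF ff]
    unfolding a1_def a2_def x1_def x2_def h_def .
  have kd: "k = (a2 + x2)/(a1 + x1)" unfolding k_def kk_def a1_def a2_def x1_def x2_def h_def ..
  have td: "t = (k\<^sup>2-1)/(k\<^sup>2+1)" unfolding t_def tt_def k_def ..
  have b0e: "b0 s1 s2 = t *\<^sub>R h" unfolding b0_def t_def h_def using False by simp
  have dd: "s2 - s1 = (a2 - a1) *\<^sub>R s + y" unfolding a1_def a2_def y_def by (rule diff_decomp)
  have es1: "E s s1 = - a1" "E s s2 = - a2" unfolding a1_def a2_def aa_def by simp_all
  show ?thesis
  proof
    assume B: "boost E s b s1 = s2"
    have bn: "b \<noteq> 0"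
    proof
      assume "b = 0"
      hence "s1 = s2" using B unfolding boost_def by simp
      thus False using False yv_self by simp
    qed
    have q: "E b b > 0" using pos[OF bs] posz[OF bs] bn by force
    define g where "g = 1 / sqrt (1 - E b b)"
    define A where "A = - (g - 1) * E s s1 + g * E b s1"
    define L where "L = (g - 1) * E b s1 / E b b - g * E s s1"
    have "s2 = s1 + A *\<^sub>R s + L *\<^sub>R b" using B boost_formula[OF bs bn bb, of s1]
      unfolding A_def L_def g_def by simp
    hence e1: "A *\<^sub>R s + L *\<^sub>R b = (a2 - a1) *\<^sub>R s + y" using dd by (simp add: algebra_simps)
    have "E (A *\<^sub>R s + L *\<^sub>R b) s = E ((a2 - a1) *\<^sub>R s + y) s" using e1 by simp
    hence AA: "A = a2 - a1" using ss bs yv_orth[of s1 s2] unfolding y_def by simp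
    hence Lb: "L *\<^sub>R b = y" using e1 by simp
    have Ln: "L \<noteq> 0" using Lb False unfolding y_def by auto
    define t' where "t' = ny / L"
    have tn: "t' \<noteq> 0" unfolding t'_def using nyp Ln by simp
    have bt: "b = t' *\<^sub>R h" unfolding t'_def using Lb yh Ln
      by (metis (no_types, lifting) divide_inverse_commute inverse_eq_divide mult.commute scaleR_scaleR
          scaleR_one divide_self_if)
    have qb: "E b b = t' * t'" unfolding bt using hh by simp
    have eb: "E b s1 = t' * x1" unfolding bt x1_def by simp
    have "t'\<^sup>2 < 1" using bb qb by (simp add: power2_eq_square)
    hence "\<bar>t'\<bar> < 1" using abs_square_less_1 by blast
    hence t'1: "-1 < t'" "t' < 1" by auto
    have Aeq: "(g-1)*a1 + g*t'*x1 = a2 - a1" using AA unfolding A_def es1 eb by (simp add: algebra_simps)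
    have "L * t' = ny" unfolding t'_def using Ln by simp
    hence "((g-1)*(t'*x1)/(t'*t') + g*a1) * t' = ny" unfolding L_def eb qb es1 by (simp add: algebra_simps)
    moreover have "((g-1)*(t'*x1)/(t'*t') + g*a1)*t' = (g-1)*x1 + g*a1*t'" using tn
      by (simp add: field_simps power2_eq_square)
    ultimately have Leq: "(g-1)*x1 + g*t'*a1 = ny" by (simp add: algebra_simps)
    have "a2 + x2 = g*(1+t')*(a1+x1)" using Aeq Leq xx2 by (simp add: algebra_simps)
    hence kk: "k = g*(1+t')" unfolding kd using ap1 by simp
    have gd: "g = 1/sqrt(1-t'\<^sup>2)" unfolding g_def qb by (simp add: power2_eq_square)
    have "t' = t" unfolding td using R2[OF t'1 gd kk] .
    thus "b = b0 s1 s2" unfolding b0e bt by simp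
  next
    assume "b = b0 s1 s2"
    hence bt: "b = t *\<^sub>R h" using b0e by simp
    define g where "g = 1/sqrt(1-t\<^sup>2)"
    note r3 = R3[OF ap1 ap2 pr xx2 nyp kd td g_def]
    have bn: "b \<noteq> 0" unfolding bt using r3(1) hh by auto
    have qb: "E b b = t * t" unfolding bt using hh by simp
    have eb: "E b s1 = t * x1" unfolding bt x1_def by simp
    have gd: "g = 1 / sqrt (1 - E b b)" unfolding g_def qb by (simp add: power2_eq_square)
    have "boost E s b s1 = s1 + (- (g - 1) * E s s1 + g * E b s1) *\<^sub>R s
     + ((g - 1) * E b s1 / E b b - g * E s s1) *\<^sub>R b" unfolding gd by (rule boost_formula[OF bs bn bb])
    also have "\<dots> = s1 + ((g-1)*a1 + g*t*x1) *\<^sub>R s + (((g-1)*(t*x1)/(t*t) + g*a1) * t) *\<^sub>R h"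
      unfolding es1 eb qb bt by (simp add: algebra_simps hh x1_def[symmetric])
    also have "\<dots> = s1 + (a2 - a1) *\<^sub>R s + ny *\<^sub>R h" unfolding r3(4) r3(5) ..
    also have "\<dots> = s2" using dd yh by (simp add: algebra_simps)
    finally show "boost E s b s1 = s2" .
  qed
qed

lemma b0_props: "E (b0 s1 s2) s = 0 \<and> E (b0 s1 s2) (b0 s1 s2) < 1"
proof (cases "yv s1 s2 = 0")
  case True thus ?thesis unfolding b0_def by simp
next
  case False
  note ff = n1 n2 t1 t2 False
  define h where "h = yh s1 s2"
  define t where "t = tt s1 s2"
  have hh: "E h h = 1" and hs: "E h s = 0" using hh[OF ff] hs[OF ff] unfolding h_def by auto
  have ap1: "aa s1 + E h s1 > 0" "aa s1 - E h s1 > 0" using apx_gen[OF ff n1 a_pos(1)[OF n1 n2 t1 t2]]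
    unfolding h_def by auto
  have ap2: "aa s2 + E h s2 > 0" "aa s2 - E h s2 > 0" using apx_gen[OF ff n2 a_pos(2)[OF n1 n2 t1 t2]]
    unfolding h_def by auto
  have r3: "-1 < t" "t < 1"
    using R3[OF ap1 ap2 prodrel[OF ff, folded h_def] xi2[OF ff, folded h_def] nypos[OF ff]
        kk_def[of s1 s2, folded h_def] tt_def[of s1 s2, folded t_def] refl] by auto
  have "\<bar>t\<bar> < 1" using r3 by auto
  hence "t\<^sup>2 < 1" using abs_square_less_1 by blast
  hence "t * t < 1" by (simp add: power2_eq_square)
  thus ?thesis unfolding b0_def using False hh hs by (simp add: h_def[symmetric] t_def[symmetric])
qed

lemma b0_antisym: "b0 s2 s1 = - b0 s1 s2"
proof (cases "yv s1 s2 = 0")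
  case True
  hence "yv s2 s1 = 0" unfolding yv_def by simp
  thus ?thesis using True unfolding b0_def by simp
next
  case False
  note ff = n1 n2 t1 t2 False
  define h where "h = yh s1 s2"
  have yy: "yv s2 s1 = - yv s1 s2" unfolding yv_def by simp
  have nn: "nyv s2 s1 = nyv s1 s2" unfolding nyv_def yy by simp
  have hh': "yh s2 s1 = - h" unfolding yh_def nn yy h_def by simp
  have ap1: "aa s1 + E h s1 > 0" "aa s1 - E h s1 > 0" using apx_gen[OF ff n1 a_pos(1)[OF n1 n2 t1 t2]]
    unfolding h_def by auto
  have ap2: "aa s2 + E h s2 > 0" "aa s2 - E h s2 > 0" using apx_gen[OF ff n2 a_pos(2)[OF n1 n2 t1 t2]]
    unfolding h_def by auto
  have pr: "(aa s1 - E h s1) * (aa s1 + E h s1) = (aa s2 - E h s2) * (aa s2 + E h s2)"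
    using prodrel[OF ff] unfolding h_def .
  have "kk s2 s1 = (aa s1 - E h s1) / (aa s2 - E h s2)" unfolding kk_def hh' by simp
  also have "\<dots> = (aa s2 + E h s2) / (aa s1 + E h s1)" using ap1 ap2 pr
    by (simp add: field_simps)
  also have "\<dots> = kk s1 s2" unfolding kk_def h_def ..
  finally have "tt s2 s1 = tt s1 s2" unfolding tt_def by simp
  moreover have "yv s2 s1 \<noteq> 0" using False yy by simp
  ultimately show ?thesis unfolding b0_def using False hh' h_def by simp
qed

end

end

lemma cs_real:
  fixes u0 u1 u2 u3 s0 s1 s2 s3 :: real
  assumes "- s0 * s0 + s1 * s1 + s2 * s2 + s3 * s3 = -1"
    and "- u0 * s0 + u1 * s1 + u2 * s2 + u3 * s3 = 0"
  shows "- u0 * u0 + u1 * u1 + u2 * u2 + u3 * u3 \<ge> 0"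
    and "- u0 * u0 + u1 * u1 + u2 * u2 + u3 * u3 = 0 \<Longrightarrow> u0 = 0 \<and> u1 = 0 \<and> u2 = 0 \<and> u3 = 0"
proof -
  define P where "P = u1 * s1 + u2 * s2 + u3 * s3"
  define A where "A = u1 * u1 + u2 * u2 + u3 * u3"
  define B where "B = s1 * s1 + s2 * s2 + s3 * s3"
  have B: "B = s0 * s0 - 1" using assms(1) unfolding B_def by linarith
  have P: "u0 * s0 = P" using assms(2) unfolding P_def by linarith
  have An: "A \<ge> 0" unfolding A_def by simp
  have "A * B - P * P = (u1 * s2-u2 * s1)\<^sup>2 + (u1 * s3-u3 * s1)\<^sup>2 + (u2 * s3-u3 * s2)\<^sup>2"
    unfolding A_def B_def P_def by (simp add: algebra_simps power2_eq_square)
  moreover have "(u1 * s2-u2 * s1)\<^sup>2 + (u1 * s3-u3 * s1)\<^sup>2 + (u2 * s3-u3 * s2)\<^sup>2 \<ge> 0" by simp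
  ultimately have cs: "P * P \<le> A * B" by linarith
  have "B \<ge> 0" unfolding B_def by simp
  hence s0: "s0 * s0 \<ge> 1" using B by linarith
  have "(u0 * u0) * (s0 * s0) \<le> A * (s0 * s0) - A" using cs P B by (simp add: algebra_simps)
  hence key: "(s0 * s0) * (A - u0 * u0) \<ge> A" by (simp add: algebra_simps)
  have "A - u0 * u0 \<ge> 0"
  proof (rule ccontr)
    assume "\<not> ?thesis"
    hence "(s0 * s0) * (A - u0 * u0) < 0" using s0 by (simp add: mult_pos_neg)
    thus False using key An by linarith
  qed
  thus "- u0 * u0 + u1 * u1 + u2 * u2 + u3 * u3 \<ge> 0" unfolding A_def by simp
  assume "- u0 * u0 + u1 * u1 + u2 * u2 + u3 * u3 = 0"
  hence "A - u0 * u0 = 0" unfolding A_def by simp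
  hence "(s0 * s0) * (A - u0 * u0) = 0" by simp
  hence "A \<le> 0" using key by linarith
  hence "A = 0" using An by linarith
  moreover have "0 \<le> u1 * u1" "0 \<le> u2 * u2" "0 \<le> u3 * u3" by simp_all
  ultimately have "u1 * u1 = 0" "u2 * u2 = 0" "u3 * u3 = 0" unfolding A_def by linarith+
  hence "u1 = 0 \<and> u2 = 0 \<and> u3 = 0" by simp
  hence "u0 * s0 = 0" using P unfolding P_def by simp
  moreover have "s0 \<noteq> 0" using s0 by auto
  ultimately show "u0 = 0 \<and> u1 = 0 \<and> u2 = 0 \<and> u3 = 0" using \<open>u1 = 0 \<and> u2 = 0 \<and> u3 = 0\<close> by simp
qed

lemma lorentz_expand:
  fixes \<eta> :: "'v::euclidean_space \<Rightarrow> 'v \<Rightarrow> real"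
  assumes L: "lorentz_form \<eta>"
  obtains e :: "nat \<Rightarrow> 'v" where
    "\<And>v. v = (- \<eta> v (e 0)) *\<^sub>R e 0 + \<eta> v (e 1) *\<^sub>R e 1 + \<eta> v (e 2) *\<^sub>R e 2 + \<eta> v (e 3) *\<^sub>R e 3"
    "\<And>u v. \<eta> u v = - \<eta> u (e 0) * \<eta> v (e 0) + \<eta> u (e 1) * \<eta> v (e 1) + \<eta> u (e 2) * \<eta> v (e 2) + \<eta> u (e 3) * \<eta> v (e 3)"
proof -
  from L have bil: "bilinear \<eta>" and sym: "\<And>u v. \<eta> u v = \<eta> v u"
    and nd: "\<And>u. (\<forall>v. \<eta> u v = 0) \<Longrightarrow> u = 0"
    unfolding lorentz_form_def by auto
  from L obtain e :: "nat \<Rightarrow> 'v" where sp: "span (e ` {..<4}) = UNIV"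
    and on: "\<And>i j. i<4 \<Longrightarrow> j<4 \<Longrightarrow> \<eta> (e i) (e j) = (if i \<noteq> j then 0 else if i = 0 then -1 else 1)"
    unfolding lorentz_form_def by blast
  interpret lor0: linear "\<lambda>y. \<eta> x y" for x using bil unfolding bilinear_def by simp
  have ex: "v = (- \<eta> v (e 0)) *\<^sub>R e 0 + \<eta> v (e 1) *\<^sub>R e 1 + \<eta> v (e 2) *\<^sub>R e 2 + \<eta> v (e 3) *\<^sub>R e 3" for v
  proof -
    define w where "w = v - ((- \<eta> v (e 0)) *\<^sub>R e 0 + \<eta> v (e 1) *\<^sub>R e 1 + \<eta> v (e 2) *\<^sub>R e 2 + \<eta> v (e 3) *\<^sub>R e 3)"
    have ej: "\<eta> w (e j) = 0" if "j < 4" for j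
    proof -
      have "j = 0 \<or> j = 1 \<or> j = 2 \<or> j = 3" using that by auto
      moreover have "\<eta> w (e j) = \<eta> v (e j) - ((- \<eta> v (e 0)) * \<eta> (e 0) (e j) + \<eta> v (e 1) * \<eta> (e 1) (e j)
          + \<eta> v (e 2) * \<eta> (e 2) (e j) + \<eta> v (e 3) * \<eta> (e 3) (e j))"
        unfolding w_def using bil by (simp add: bilinear_lsub bilinear_ladd bilinear_lmul bilinear_lneg)
      ultimately show ?thesis using on by auto
    qed
    have "\<eta> w x = 0" for x
    proof -
      have "x \<in> span (e ` {..<4})" using sp by simp
      thus ?thesis
        by (rule linear_eq_0_on_span[OF lor0.linear_axioms, rotated]) (auto simp: ej)
    qed
    hence "w = 0" using nd by blast
    thus ?thesis unfolding w_def by simp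
  qed
  have ipp: "\<eta> u v = - \<eta> u (e 0) * \<eta> v (e 0) + \<eta> u (e 1) * \<eta> v (e 1) + \<eta> u (e 2) * \<eta> v (e 2) + \<eta> u (e 3) * \<eta> v (e 3)" for u v
  proof -
    have "\<eta> u v = \<eta> u ((- \<eta> v (e 0)) *\<^sub>R e 0 + \<eta> v (e 1) *\<^sub>R e 1 + \<eta> v (e 2) *\<^sub>R e 2 + \<eta> v (e 3) *\<^sub>R e 3)"
      by (rule arg_cong[where f="\<eta> u", OF ex])
    also have "\<dots> = - \<eta> u (e 0) * \<eta> v (e 0) + \<eta> u (e 1) * \<eta> v (e 1) + \<eta> u (e 2) * \<eta> v (e 2) + \<eta> u (e 3) * \<eta> v (e 3)"
      by (simp add: bilinear_radd[OF bil] bilinear_rsub[OF bil] bilinear_rmul[OF bil] bilinear_rneg[OF bil])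
    finally show ?thesis .
  qed
  show ?thesis by (rule that[OF ex ipp])
qed

lemma lorentz_pos:
  fixes \<eta> :: "'v::euclidean_space \<Rightarrow> 'v \<Rightarrow> real"
  assumes L: "lorentz_form \<eta>" and ss: "\<eta> s s = -1" and us: "\<eta> u s = 0"
  shows "\<eta> u u \<ge> 0" "\<eta> u u = 0 \<Longrightarrow> u = 0"
proof -
  obtain e :: "nat \<Rightarrow> 'v" where ex: "\<And>v. v = (- \<eta> v (e 0)) *\<^sub>R e 0 + \<eta> v (e 1) *\<^sub>R e 1 + \<eta> v (e 2) *\<^sub>R e 2 + \<eta> v (e 3) *\<^sub>R e 3"
    and ip: "\<And>u v. \<eta> u v = - \<eta> u (e 0) * \<eta> v (e 0) + \<eta> u (e 1) * \<eta> v (e 1) + \<eta> u (e 2) * \<eta> v (e 2) + \<eta> u (e 3) * \<eta> v (e 3)"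
    by (rule lorentz_expand[OF L]) (rule that)
  note c = cs_real[of "\<eta> s (e 0)" "\<eta> s (e 1)" "\<eta> s (e 2)" "\<eta> s (e 3)" "\<eta> u (e 0)" "\<eta> u (e 1)" "\<eta> u (e 2)" "\<eta> u (e 3)"]
  have h1: "- \<eta> s (e 0) * \<eta> s (e 0) + \<eta> s (e 1) * \<eta> s (e 1) + \<eta> s (e 2) * \<eta> s (e 2) + \<eta> s (e 3) * \<eta> s (e 3) = -1"
    using ss ip[of s s] by simp
  have h2: "- \<eta> u (e 0) * \<eta> s (e 0) + \<eta> u (e 1) * \<eta> s (e 1) + \<eta> u (e 2) * \<eta> s (e 2) + \<eta> u (e 3) * \<eta> s (e 3) = 0"
    using us ip[of u s] by simp
  show "\<eta> u u \<ge> 0" using c(1)[OF h1 h2] ip[of u u] by simp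
  assume "\<eta> u u = 0"
  hence "\<eta> u (e 0) = 0 \<and> \<eta> u (e 1) = 0 \<and> \<eta> u (e 2) = 0 \<and> \<eta> u (e 3) = 0" using c(2)[OF h1 h2] ip[of u u] by simp
  hence "(- \<eta> u (e 0)) *\<^sub>R e 0 + \<eta> u (e 1) *\<^sub>R e 1 + \<eta> u (e 2) *\<^sub>R e 2 + \<eta> u (e 3) *\<^sub>R e 3 = 0" by simp
  thus "u = 0" using ex[of u] by argo
qed


lemma comp_neg:
  fixes \<eta> :: "'v::euclidean_space \<Rightarrow> 'v \<Rightarrow> real"
  assumes L: "lorentz_form \<eta>" and S: "S \<in> components (hyperboloid \<eta>)" and s: "s \<in> S" and x: "x \<in> S"
  shows "\<eta> x s < 0"
proof -
  from L have bil: "bilinear \<eta>" unfolding lorentz_form_def by auto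
  have hyp: "\<And>z. z \<in> S \<Longrightarrow> \<eta> z z = -1" using in_components_subset[OF S] unfolding hyperboloid_def by auto
  have nz: "\<eta> z s \<noteq> 0" if "z \<in> S" for z
  proof
    assume z0: "\<eta> z s = 0"
    have "\<eta> z z \<ge> 0" by (rule lorentz_pos(1)[OF L hyp[OF s] z0])
    thus False using hyp[OF that] by simp
  qed
  have "linear (\<lambda>z. \<eta> z s)" using bil unfolding bilinear_def by simp
  hence cont: "continuous_on S (\<lambda>z. \<eta> z s)"
    by (intro linear_continuous_on) (simp add: linear_conv_bounded_linear)
  have conn: "connected ((\<lambda>z. \<eta> z s) ` S)"
    by (rule connected_continuous_image[OF cont in_components_connected[OF S]])
  show "\<eta> x s < 0"
  proof (rule ccontr)
    assume "\<not> \<eta> x s < 0" hence xp: "\<eta> x s > 0" using nz[OF x] by linarith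
    have a: "\<eta> s s \<in> (\<lambda>z. \<eta> z s) ` S" using s by simp
    have b: "\<eta> x s \<in> (\<lambda>z. \<eta> z s) ` S" using x by simp
    have "\<eta> s s = -1" by (rule hyp[OF s])
    hence le: "\<eta> s s \<le> 0" "0 \<le> \<eta> x s" using xp by auto
    have "0 \<in> (\<lambda>z. \<eta> z s) ` S"
      using conn[unfolded connected_iff_interval, rule_format, OF a b le] .
    then obtain z where "z \<in> S" "\<eta> z s = 0" by auto
    thus False using nz by auto
  qed
qed

theorem mainTheorem5:
  fixes \<eta> :: "'v::euclidean_space \<Rightarrow> 'v \<Rightarrow> real" and S :: "'v set"
  assumes "lorentz_form \<eta>"
    and "S \<in> components (hyperboloid \<eta>)"
    and "s \<in> S" and "s1 \<in> S" and "s2 \<in> S"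
  shows "link_velocity \<eta> s s2 s1 = - link_velocity \<eta> s s1 s2"
proof -
  note L = assms(1)
  from L have bil: "bilinear \<eta>" and sym: "\<And>u v. \<eta> u v = \<eta> v u" unfolding lorentz_form_def by auto
  have hyp: "\<And>z. z \<in> S \<Longrightarrow> \<eta> z z = -1" using in_components_subset[OF assms(2)] unfolding hyperboloid_def by auto
  have ss: "\<eta> s s = -1" by (rule hyp[OF assms(3)])
  interpret l: lor \<eta> s
  proof
    show "bilinear \<eta>" by (rule bil)
    show "\<eta> u v = \<eta> v u" for u v by (rule sym)
    show "\<eta> s s = -1" by (rule ss)
    show "\<eta> u s = 0 \<Longrightarrow> \<eta> u u \<ge> 0" for u by (rule lorentz_pos(1)[OF L ss])
    show "\<eta> u s = 0 \<Longrightarrow> \<eta> u u = 0 \<Longrightarrow> u = 0" for u by (rule lorentz_pos(2)[OF L ss])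
  qed
  have n1: "\<eta> s1 s1 = -1" and n2: "\<eta> s2 s2 = -1" using hyp assms(4,5) by auto
  have t1: "\<eta> s1 s < 0" and t2: "\<eta> s2 s < 0" using comp_neg[OF L assms(2) assms(3)] assms(4,5) by auto
  have lv: "link_velocity \<eta> s p1 p2 = l.b0 p1 p2"
    if p: "\<eta> p1 p1 = -1" "\<eta> p2 p2 = -1" "\<eta> p1 s < 0" "\<eta> p2 s < 0" for p1 p2
  proof -
    note bp = l.b0_props[OF p]
    show ?thesis unfolding link_velocity_def tangent_space_def
    proof (rule the_equality)
      show "l.b0 p1 p2 \<in> {u. \<eta> u s = 0} \<and> \<eta> (l.b0 p1 p2) (l.b0 p1 p2) < 1 \<and> boost \<eta> s (l.b0 p1 p2) p1 = p2"
        using bp l.char[OF p, of "l.b0 p1 p2"] by simp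
    next
      fix b assume "b \<in> {u. \<eta> u s = 0} \<and> \<eta> b b < 1 \<and> boost \<eta> s b p1 = p2"
      thus "b = l.b0 p1 p2" using l.char[OF p, of b] by simp
    qed
  qed
  show ?thesis using lv[OF n2 n1 t2 t1] lv[OF n1 n2 t1 t2] l.b0_antisym[OF n1 n2 t1 t2] by simp
qed


end
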